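(* Let $$L=D_xD_y(D_x+D_y)+a_{20}D_x^2+a_{11}D_xD_y+a_{02}D_y^2+a_{10}D_x+a_{01}D_y+a_{00},$$ with all $a_{ij}\in K$, and put $s_2=a_{20}-a_{11}+a_{02}$. Then the common obstacle to factorization of $L$ of type $(X)(Y)(X+Y)$ is $$\big(a_{10}-a_{20}a_{11}+a_{20}^2-\partial_x(a_{20})+\partial_y(s_2)\big)D_x+\big(a_{01}-a_{02}a_{11}+a_{02}^2+\partial_x(a_{02}-a_{11})\big)D_y+a_{00}+a_{20}a_{02}s_2+s_2\partial_x(a_{20})+a_{20}\partial_x(s_2)+\partial_x\partial_y(s_2)+a_{02}\partial_y(s_2).$$
   Context: $K$ is a field with two commuting derivations $\partial_x,\partial_y$, and $K[D_x,D_y]$ is the ring of linear differential operators over $K$: $D_xD_y=D_yD_x$, $D_x\circ f=fD_x+\partial_x(f)$ and $D_y\circ f=fD_y+\partial_y(f)$ for $f\in K$. For an operator $M=\sum m_{ij}D_x^iD_y^j$, $\operatorname{ord}(M)$ is the largest $i+j$ with $m_{ij}\ne0$ ($\operatorname{ord}(0)=-\infty$), and the symbol is $\operatorname{Sym}_M=\sum_{i+j=\operatorname{ord}M}m_{ij}X^iY^j$. A factorization of type $(S_1)(S_2)(S_3)$ of $M$ is $M=F_1\circ F_2\circ F_3$ with $\operatorname{Sym}_{F_i}=S_i$. A common obstacle to factorization of $L$ of that type is an operator $R$ such that $L-R$ has such a factorization and $R$ has minimal possible order among such operators. *)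

theory Defs
  imports Complex_Main "HOL-Library.Extended_Real"
begin

text \<open>A linear differential operator sum m_ij Dx^i Dy^j over K is represented by its
coefficient function m :: nat => nat => 'a, required to be finitely supported.\<close>

definition is_derivation :: "('a::field \<Rightarrow> 'a) \<Rightarrow> bool" where
  "is_derivation d \<longleftrightarrow> (\<forall>a b. d (a + b) = d a + d b) \<and> (\<forall>a b. d (a * b) = a * d b + d a * b)"

definition op_supp :: "(nat \<Rightarrow> nat \<Rightarrow> 'a::zero) \<Rightarrow> (nat \<times> nat) set" where
  "op_supp M = {(i, j). M i j \<noteq> 0}"

definition op_fin :: "(nat \<Rightarrow> nat \<Rightarrow> 'a::zero) \<Rightarrow> bool" where
  "op_fin M \<longleftrightarrow> finite (op_supp M)"

text \<open>Composition in K[Dx,Dy]: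
  (Dx^i Dy^j) o b = sum_{r<=i, s<=j} C(i,r) C(j,s) dx^r dy^s (b) Dx^(i-r) Dy^(j-s).\<close>
definition op_mul :: "('a::field \<Rightarrow> 'a) \<Rightarrow> ('a \<Rightarrow> 'a) \<Rightarrow>
    (nat \<Rightarrow> nat \<Rightarrow> 'a) \<Rightarrow> (nat \<Rightarrow> nat \<Rightarrow> 'a) \<Rightarrow> (nat \<Rightarrow> nat \<Rightarrow> 'a)" where
  "op_mul dx dy A B = (\<lambda>p q.
     \<Sum>(i, j)\<in>op_supp A. \<Sum>(k, l)\<in>op_supp B. \<Sum>r\<le>i. \<Sum>s\<le>j.
       (if i - r + k = p \<and> j - s + l = q
        then of_nat (i choose r) * of_nat (j choose s) * A i j * (dx ^^ r) ((dy ^^ s) (B k l))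
        else 0))"

definition op_ord :: "(nat \<Rightarrow> nat \<Rightarrow> 'a::zero) \<Rightarrow> ereal" where
  "op_ord M = (if op_supp M = {} then MInfty
               else ereal (real (Max ((\<lambda>(i, j). i + j) ` op_supp M))))"

text \<open>Symbol: the homogeneous top-order part, as coefficient function of a polynomial in X, Y.\<close>
definition op_sym :: "(nat \<Rightarrow> nat \<Rightarrow> 'a::zero) \<Rightarrow> (nat \<Rightarrow> nat \<Rightarrow> 'a)" where
  "op_sym M = (\<lambda>i j. if ereal (real (i + j)) = op_ord M then M i j else 0)"

definition has_factorization3 ::
  "('a::field \<Rightarrow> 'a) \<Rightarrow> ('a \<Rightarrow> 'a) \<Rightarrow> (nat \<Rightarrow> nat \<Rightarrow> 'a) \<Rightarrow>
   (nat \<Rightarrow> nat \<Rightarrow> 'a) \<Rightarrow> (nat \<Rightarrow> nat \<Rightarrow> 'a) \<Rightarrow> (nat \<Rightarrow> nat \<Rightarrow> 'a) \<Rightarrow> bool" where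
  "has_factorization3 dx dy M S1 S2 S3 \<longleftrightarrow>
     (\<exists>F1 F2 F3. op_fin F1 \<and> op_fin F2 \<and> op_fin F3 \<and>
        M = op_mul dx dy (op_mul dx dy F1 F2) F3 \<and>
        op_sym F1 = S1 \<and> op_sym F2 = S2 \<and> op_sym F3 = S3)"

definition is_common_obstacle3 ::
  "('a::field \<Rightarrow> 'a) \<Rightarrow> ('a \<Rightarrow> 'a) \<Rightarrow> (nat \<Rightarrow> nat \<Rightarrow> 'a) \<Rightarrow>
   (nat \<Rightarrow> nat \<Rightarrow> 'a) \<Rightarrow> (nat \<Rightarrow> nat \<Rightarrow> 'a) \<Rightarrow> (nat \<Rightarrow> nat \<Rightarrow> 'a) \<Rightarrow>
   (nat \<Rightarrow> nat \<Rightarrow> 'a) \<Rightarrow> bool" where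
  "is_common_obstacle3 dx dy L S1 S2 S3 R \<longleftrightarrow>
     op_fin R \<and> has_factorization3 dx dy (L - R) S1 S2 S3 \<and>
     (\<forall>R'. op_fin R' \<and> has_factorization3 dx dy (L - R') S1 S2 S3 \<longrightarrow> op_ord R \<le> op_ord R')"

definition symX :: "nat \<Rightarrow> nat \<Rightarrow> 'a::{zero,one}" where
  "symX = (\<lambda>i j. if i = 1 \<and> j = 0 then 1 else 0)"
definition symY :: "nat \<Rightarrow> nat \<Rightarrow> 'a::{zero,one}" where
  "symY = (\<lambda>i j. if i = 0 \<and> j = 1 then 1 else 0)"
definition symXY :: "nat \<Rightarrow> nat \<Rightarrow> 'a::{zero,one}" where
  "symXY = (\<lambda>i j. if (i = 1 \<and> j = 0) \<or> (i = 0 \<and> j = 1) then 1 else 0)"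

end

theory Submission imports Defs begin

lemma deriv_simps:
  assumes "is_derivation d"
  shows "d (a + b) = d a + d b" "d (a * b) = a * d b + d a * b" "d 0 = 0"
        "d (- a) = - d a" "d (a - b) = d a - d b" "d 1 = 0"
proof -
  show 1: "d (a + b) = d a + d b" using assms unfolding is_derivation_def by blast
  show 2: "d (a * b) = a * d b + d a * b" using assms unfolding is_derivation_def by blast
  have "d (0 * 0) = 0 * d 0 + d 0 * 0" using assms unfolding is_derivation_def by blast
  then show 0: "d 0 = 0" by simp
  have "d (a + - a) = d a + d (- a)" using assms unfolding is_derivation_def by blast
  then show n: "d (- a) = - d a" using 0 by (simp add: eq_neg_iff_add_eq_0 add.commute)
  have "d (a + - b) = d a + d (- b)" using assms unfolding is_derivation_def by blast
  moreover have "d (b + - b) = d b + d (- b)" using assms unfolding is_derivation_def by blast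
  ultimately show "d (a - b) = d a - d b" using 0 by (simp add: eq_neg_iff_add_eq_0 add.commute)
  have "d (1*1) = 1 * d 1 + d 1 * 1" using assms unfolding is_derivation_def by blast
  then show "d 1 = 0" by (metis add_cancel_right_right mult_1 mult_1_right)
qed

lemma funpow_zero:
  fixes d :: "'a::zero \<Rightarrow> 'a"
  shows "d 0 = 0 \<Longrightarrow> (d ^^ n) 0 = 0"
  by (induction n) simp_all

lemma op_mul_supp:
  fixes dx dy :: "'a::field \<Rightarrow> 'a"
  assumes "finite S" "op_supp A \<subseteq> S" "finite T" "op_supp B \<subseteq> T" "dx 0 = 0" "dy 0 = 0"
  shows "op_mul dx dy A B = (\<lambda>p q. \<Sum>(i, j)\<in>S. \<Sum>(k, l)\<in>T. \<Sum>r\<le>i. \<Sum>s\<le>j.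
       (if i - r + k = p \<and> j - s + l = q
        then of_nat (i choose r) * of_nat (j choose s) * A i j * (dx ^^ r) ((dy ^^ s) (B k l))
        else 0))"
proof (intro ext)
  fix p q
  let ?f = "\<lambda>(i,j) (k,l). \<Sum>r\<le>i. \<Sum>s\<le>j.
       (if i - r + k = p \<and> j - s + l = q
        then of_nat (i choose r) * of_nat (j choose s) * A i j * (dx ^^ r) ((dy ^^ s) (B k l))
        else (0::'a))"
  have inner: "(\<Sum>x\<in>op_supp B. ?f y x) = (\<Sum>x\<in>T. ?f y x)" for y
  proof (rule sum.mono_neutral_left[OF assms(3,4)], rule ballI)
    fix x assume "x \<in> T - op_supp B"
    then have "B (fst x) (snd x) = 0" by (auto simp: op_supp_def)
    moreover have "(dx ^^ r) ((dy ^^ s) 0) = 0" for r s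
      using assms(5,6) by (simp add: funpow_zero)
    ultimately show "?f y x = 0"
      by (auto split: prod.splits intro!: sum.neutral)
  qed
  have outer: "(\<Sum>y\<in>op_supp A. \<Sum>x\<in>T. ?f y x) = (\<Sum>y\<in>S. \<Sum>x\<in>T. ?f y x)"
  proof (rule sum.mono_neutral_left[OF assms(1,2)], rule ballI)
    fix y assume "y \<in> S - op_supp A"
    then have "A (fst y) (snd y) = 0" by (auto simp: op_supp_def)
    then show "(\<Sum>x\<in>T. ?f y x) = 0"
      by (auto simp: split: prod.splits intro!: sum.neutral)
  qed
  show "op_mul dx dy A B p q = (\<Sum>(i, j)\<in>S. \<Sum>(k, l)\<in>T. \<Sum>r\<le>i. \<Sum>s\<le>j.
       (if i - r + k = p \<and> j - s + l = q
        then of_nat (i choose r) * of_nat (j choose s) * A i j * (dx ^^ r) ((dy ^^ s) (B k l))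
        else 0))"
    unfolding op_mul_def using inner outer
    by (simp add: case_prod_beta' split_def)
qed

definition "F1 c = (\<lambda>i j. if (i,j)=(1::nat,0::nat) then 1 else if (i,j)=(0,0) then c else 0)"
definition "F2 c = (\<lambda>i j. if (i,j)=(0::nat,1::nat) then 1 else if (i,j)=(0,0) then c else 0)"
definition "F3 c = (\<lambda>i j. if (i,j)=(1::nat,0::nat) \<or> (i,j)=(0,1) then 1 else if (i,j)=(0,0) then c else 0)"
definition "G dx c1 c2 = (\<lambda>i j. if (i,j)=(1::nat,1::nat) then 1 else if (i,j)=(1,0) then c2
   else if (i,j)=(0,1) then c1 else if (i,j)=(0,0) then dx c2 + c1 * c2 else 0)"

lemma atMost01: "sum f {..0::nat} = f 0" "sum f {..Suc 0} = f 0 + f (Suc 0)" "sum f {..1::nat} = f 0 + f 1"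
  by (simp_all add: atMost_Suc add.commute)

lemma prod12:
  fixes dx dy :: "'a::field \<Rightarrow> 'a"
  assumes "is_derivation dx" "is_derivation dy"
  shows "op_mul dx dy (F1 c1) (F2 c2) = G dx c1 c2"
proof -
  have e: "op_mul dx dy (F1 c1) (F2 c2) = (\<lambda>p q. \<Sum>(i, j)\<in>{(0,0),(1,0)}. \<Sum>(k, l)\<in>{(0,0),(0,1)}. \<Sum>r\<le>i. \<Sum>s\<le>j.
       (if i - r + k = p \<and> j - s + l = q
        then of_nat (i choose r) * of_nat (j choose s) * F1 c1 i j * (dx ^^ r) ((dy ^^ s) (F2 c2 k l))
        else 0))"
    by (rule op_mul_supp) (auto simp: op_supp_def F1_def F2_def deriv_simps assms)
  show ?thesis unfolding e
  proof (intro ext)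
    fix p q :: nat
    show "(\<Sum>(i, j)\<in>{(0,0),(1,0)}. \<Sum>(k, l)\<in>{(0,0),(0,1)}. \<Sum>r\<le>i. \<Sum>s\<le>j.
       (if i - r + k = p \<and> j - s + l = q
        then of_nat (i choose r) * of_nat (j choose s) * F1 c1 i j * (dx ^^ r) ((dy ^^ s) (F2 c2 k l))
        else 0)) = G dx c1 c2 p q"
      by (simp add: atMost01 F1_def F2_def G_def deriv_simps assms)
  qed
qed

definition "P dx dy c1 c2 c3 = (\<lambda>i j. if (i,j)=(2::nat,1::nat) then 1 else if (i,j)=(1,2) then 1
   else if (i,j)=(2,0) then c2 else if (i,j)=(0,2) then c1 else if (i,j)=(1,1) then c3+c2+c1
   else if (i,j)=(1,0) then dy c3 + c2 * c3 + (dx c2 + c1 * c2)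
   else if (i,j)=(0,1) then dx c3 + c1 * c3 + (dx c2 + c1 * c2)
   else if (i,j)=(0,0) then dx (dy c3) + c2 * dx c3 + c1 * dy c3 + (dx c2 + c1 * c2) * c3 else 0)"

lemma prod123:
  fixes dx dy :: "'a::field \<Rightarrow> 'a"
  assumes "is_derivation dx" "is_derivation dy"
  shows "op_mul dx dy (G dx c1 c2) (F3 c3) = P dx dy c1 c2 c3"
proof -
  have e: "op_mul dx dy (G dx c1 c2) (F3 c3) = (\<lambda>p q. \<Sum>(i, j)\<in>{(0,0),(1,0),(0,1),(1,1)}. \<Sum>(k, l)\<in>{(0,0),(1,0),(0,1)}. \<Sum>r\<le>i. \<Sum>s\<le>j.
       (if i - r + k = p \<and> j - s + l = q
        then of_nat (i choose r) * of_nat (j choose s) * G dx c1 c2 i j * (dx ^^ r) ((dy ^^ s) (F3 c3 k l))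
        else 0))"
    by (rule op_mul_supp) (auto simp: op_supp_def G_def F3_def deriv_simps assms split: if_splits)
  show ?thesis unfolding e
  proof (intro ext)
    fix p q :: nat
    show "(\<Sum>(i, j)\<in>{(0,0),(1,0),(0,1),(1,1)}. \<Sum>(k, l)\<in>{(0,0),(1,0),(0,1)}. \<Sum>r\<le>i. \<Sum>s\<le>j.
       (if i - r + k = p \<and> j - s + l = q
        then of_nat (i choose r) * of_nat (j choose s) * G dx c1 c2 i j * (dx ^^ r) ((dy ^^ s) (F3 c3 k l))
        else 0)) = P dx dy c1 c2 c3 p q"
      by (simp add: atMost01 F3_def G_def P_def deriv_simps assms algebra_simps)
  qed
qed

lemma ord_ge:
  assumes "op_fin M" "M i j \<noteq> 0"
  shows "ereal (real (i+j)) \<le> op_ord M"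
proof -
  have m: "(i,j) \<in> op_supp M" using assms(2) by (simp add: op_supp_def)
  then have ne: "op_supp M \<noteq> {}" by auto
  have "i + j \<le> Max ((\<lambda>(i, j). i + j) ` op_supp M)"
    using assms(1) m unfolding op_fin_def by (intro Max_ge) force+
  then show ?thesis using ne by (simp add: op_ord_def)
qed

lemma ord_le:
  assumes "op_fin M" "\<And>i j. M i j \<noteq> 0 \<Longrightarrow> i + j \<le> n"
  shows "op_ord M \<le> ereal (real n)"
proof (cases "op_supp M = {}")
  case True then show ?thesis by (simp add: op_ord_def)
next
  case False
  have "Max ((\<lambda>(i, j). i + j) ` op_supp M) \<le> n"
    using assms False unfolding op_fin_def
    by (subst Max_le_iff) (auto simp: op_supp_def)
  then show ?thesis using False by (simp add: op_ord_def)
qed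

lemma sym_shape:
  fixes F S :: "nat \<Rightarrow> nat \<Rightarrow> 'a::zero"
  assumes "op_fin F" "op_sym F = S" "a + b = 1" "S a b \<noteq> 0"
  shows "\<And>i j. 2 \<le> i + j \<Longrightarrow> F i j = 0" "\<And>i j. i + j = 1 \<Longrightarrow> F i j = S i j"
proof -
  have "op_sym F a b \<noteq> 0" using assms by simp
  then have o: "op_ord F = ereal 1" using assms(3) unfolding op_sym_def by (auto split: if_splits)
  have le: "i + j \<le> 1" if "F i j \<noteq> 0" for i j
  proof -
    have "ereal (real (i+j)) \<le> ereal 1" using ord_ge[OF assms(1) that] o by simp
    then show ?thesis by simp
  qed
  show "\<And>i j. 2 \<le> i + j \<Longrightarrow> F i j = 0" using le by force
  show "\<And>i j. i + j = 1 \<Longrightarrow> F i j = S i j"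
  proof -
    fix i j :: nat assume "i + j = 1"
    then have "op_sym F i j = F i j" using o unfolding op_sym_def by simp
    then show "F i j = S i j" using assms(2) by simp
  qed
qed

lemma cases4: "2 \<le> i + j \<or> (i = 0 \<and> j = 0) \<or> (i = 1 \<and> j = 0) \<or> (i = (0::nat) \<and> j = (1::nat))"
  by arith

lemma fin_sub: "op_supp M \<subseteq> A \<Longrightarrow> finite A \<Longrightarrow> op_fin M"
  unfolding op_fin_def by (rule finite_subset)

lemma shapeX: fixes F :: "nat \<Rightarrow> nat \<Rightarrow> 'a::field" assumes "op_fin F" "op_sym F = symX" shows "F = F1 (F 0 0)"
proof -
  note h = sym_shape[OF assms, of 1 0]
  show ?thesis unfolding fun_eq_iff F1_def
  proof (intro allI)
    fix i j :: nat
    show "F i j = (if (i, j) = (1, 0) then 1 else if (i, j) = (0, 0) then F 0 0 else 0)"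
      using h(1)[of i j] h(2)[of i j] using cases4[of i j] by (elim disjE) (auto simp: symX_def)
  qed
qed

lemma shapeY: fixes F :: "nat \<Rightarrow> nat \<Rightarrow> 'a::field" assumes "op_fin F" "op_sym F = symY" shows "F = F2 (F 0 0)"
proof -
  note h = sym_shape[OF assms, of 0 1]
  show ?thesis unfolding fun_eq_iff F2_def
  proof (intro allI)
    fix i j :: nat
    show "F i j = (if (i, j) = (0, 1) then 1 else if (i, j) = (0, 0) then F 0 0 else 0)"
      using h(1)[of i j] h(2)[of i j] using cases4[of i j] by (elim disjE) (auto simp: symY_def)
  qed
qed

lemma shapeXY: fixes F :: "nat \<Rightarrow> nat \<Rightarrow> 'a::field" assumes "op_fin F" "op_sym F = symXY" shows "F = F3 (F 0 0)"
proof -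
  note h = sym_shape[OF assms, of 1 0]
  show ?thesis unfolding fun_eq_iff F3_def
  proof (intro allI)
    fix i j :: nat
    show "F i j = (if (i, j) = (1, 0) \<or> (i, j) = (0, 1) then 1 else if (i, j) = (0, 0) then F 0 0 else 0)"
      using h(1)[of i j] h(2)[of i j] using cases4[of i j] by (elim disjE) (auto simp: symXY_def)
  qed
qed

lemma fin_F: "op_fin (F1 c)" "op_fin (F2 c)" "op_fin (F3 c)"
  by (rule fin_sub[where A="{(0,0),(1,0),(0,1)}"]; auto simp: op_supp_def F1_def F2_def F3_def split: if_splits)+

lemma ord_F: "op_ord (F1 (c::'a::field)) = 1" "op_ord (F2 c) = 1" "op_ord (F3 c) = 1"
proof -
  have le: "op_ord M \<le> 1" if "op_fin M" "\<And>i j. M i j \<noteq> 0 \<Longrightarrow> i + j \<le> 1" for M :: "nat \<Rightarrow> nat \<Rightarrow> 'a"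
    using ord_le[OF that] by (simp add: one_ereal_def)
  have ge: "1 \<le> op_ord M" if "op_fin M" "M i j \<noteq> 0" "i + j = 1" for M :: "nat \<Rightarrow> nat \<Rightarrow> 'a" and i j
    using ord_ge[OF that(1,2)] that(3) by (simp add: one_ereal_def)
  show "op_ord (F1 c) = 1"
  proof (rule antisym)
    show "op_ord (F1 c) \<le> 1" by (rule le[OF fin_F(1)]) (auto simp: F1_def split: if_splits)
    have "ereal (real (1 + 0)) \<le> op_ord (F1 c)" by (rule ord_ge[OF fin_F(1)]) (simp add: F1_def)
    then show "1 \<le> op_ord (F1 c)" by (simp add: one_ereal_def)
  qed
  show "op_ord (F2 c) = 1"
  proof (rule antisym)
    show "op_ord (F2 c) \<le> 1" by (rule le[OF fin_F(2)]) (auto simp: F2_def split: if_splits)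
    have "ereal (real (0 + 1)) \<le> op_ord (F2 c)" by (rule ord_ge[OF fin_F(2)]) (simp add: F2_def)
    then show "1 \<le> op_ord (F2 c)" by (simp add: one_ereal_def)
  qed
  show "op_ord (F3 c) = 1"
  proof (rule antisym)
    show "op_ord (F3 c) \<le> 1" by (rule le[OF fin_F(3)]) (auto simp: F3_def split: if_splits)
    have "ereal (real (1 + 0)) \<le> op_ord (F3 c)" by (rule ord_ge[OF fin_F(3)]) (simp add: F3_def)
    then show "1 \<le> op_ord (F3 c)" by (simp add: one_ereal_def)
  qed
qed

lemma sym_F: "op_sym (F1 (c::'a::field)) = symX" "op_sym (F2 c) = symY" "op_sym (F3 c) = symXY"
  unfolding op_sym_def ord_F
  by (auto simp: fun_eq_iff F1_def F2_def F3_def symX_def symY_def symXY_def one_ereal_def)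

lemma obst_gen:
  fixes dx dy :: "'a::field \<Rightarrow> 'a"
  assumes dd: "is_derivation dx" "is_derivation dy"
    and LR: "L - R = P dx dy c1 c2 c3" and fR: "op_fin R" and sR: "\<And>i j. R i j \<noteq> 0 \<Longrightarrow> i + j \<le> 1"
  shows "is_common_obstacle3 dx dy L symX symY symXY R"
  unfolding is_common_obstacle3_def
proof (intro conjI allI impI)
  show "op_fin R" by fact
  show "has_factorization3 dx dy (L - R) symX symY symXY"
  proof -
    have "L - R = op_mul dx dy (op_mul dx dy (F1 c1) (F2 c2)) (F3 c3)"
      unfolding LR by (simp only: prod12[OF dd] prod123[OF dd])
    then show ?thesis unfolding has_factorization3_def
      by (intro exI[of _ "F1 c1"] exI[of _ "F2 c2"] exI[of _ "F3 c3"] conjI fin_F sym_F)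
  qed
  fix R' assume "op_fin R' \<and> has_factorization3 dx dy (L - R') symX symY symXY"
  then obtain G1 G2 G3 where fR': "op_fin R'" and g: "op_fin G1" "op_fin G2" "op_fin G3"
    and eq: "L - R' = op_mul dx dy (op_mul dx dy G1 G2) G3"
    and s: "op_sym G1 = symX" "op_sym G2 = symY" "op_sym G3 = symXY"
    unfolding has_factorization3_def by blast
  have eq': "L - R' = P dx dy (G1 0 0) (G2 0 0) (G3 0 0)"
    using eq shapeX[OF g(1) s(1)] shapeY[OF g(2) s(2)] shapeXY[OF g(3) s(3)]
    using prod12[OF dd] prod123[OF dd] by metis
  have oR: "op_ord R \<le> 1" using ord_le[OF fR, of 1] sR by (simp only: one_ereal_def of_nat_1) blast
  show "op_ord R \<le> op_ord R'"
  proof (cases "R' 2 0 = 0 \<and> R' 0 2 = 0 \<and> R' 1 1 = 0")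
    case False
    then obtain i j where "R' i j \<noteq> 0" "i + j = 2"
      by (metis add_0 add_2_eq_Suc' nat_1_add_1 one_add_one add.commute)
    then have "ereal 2 \<le> op_ord R'" using ord_ge[OF fR', of i j] by simp
    moreover have "op_ord R \<le> ereal 2" using oR order_trans[of "op_ord R" 1 "ereal 2"] by (simp add: one_ereal_def)
    ultimately show ?thesis by simp
  next
    case True
    have R0: "R 2 0 = 0" "R 0 2 = 0" "R 1 1 = 0" using sR[of 2 0] sR[of 0 2] sR[of 1 1] by linarith+
    have a: "(L - R) i j = (L - R') i j + (R' i j - R i j)" for i j by simp
    have b: "P dx dy c1 c2 c3 i j = P dx dy (G1 0 0) (G2 0 0) (G3 0 0) i j + (R' i j - R i j)" for i j
      using a[of i j] unfolding LR eq' .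
    have e1: "G2 0 0 = c2" using b[of 2 0] True R0 by (simp add: P_def)
    have e2: "G1 0 0 = c1" using b[of 0 2] True R0 by (simp add: P_def)
    have e3: "G3 0 0 = c3" using b[of 1 1] True R0 e1 e2 by (simp add: P_def)
    have "L - R' = L - R" by (simp only: eq' LR e1 e2 e3)
    then have "R' = R" unfolding fun_eq_iff by (simp add: fun_diff_def)
    then show ?thesis by simp
  qed
qed

theorem mainTheorem14:
  fixes dx dy :: "'a::field \<Rightarrow> 'a"
    and a20 a11 a02 a10 a01 a00 :: 'a
  assumes "is_derivation dx" and "is_derivation dy"
    and "\<forall>f. dx (dy f) = dy (dx f)"
  shows "let s2 = a20 - a11 + a02;
             L = (\<lambda>i j. if (i, j) = (2, 1) then 1 else if (i, j) = (1, 2) then 1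
                   else if (i, j) = (2, 0) then a20 else if (i, j) = (1, 1) then a11
                   else if (i, j) = (0, 2) then a02 else if (i, j) = (1, 0) then a10
                   else if (i, j) = (0, 1) then a01 else if (i, j) = (0, 0) then a00 else 0);
             R = (\<lambda>i j. if (i, j) = (1, 0) then
                     a10 - a20 * a11 + a20 ^ 2 - dx a20 + dy s2
                   else if (i, j) = (0, 1) then
                     a01 - a02 * a11 + a02 ^ 2 + dx (a02 - a11)
                   else if (i, j) = (0, 0) then
                     a00 + a20 * a02 * s2 + s2 * dx a20 + a20 * dx s2 + dx (dy s2) + a02 * dy s2
                   else 0)
         in is_common_obstacle3 dx dy L symX symY symXY R"
proof -
  note dx = deriv_simps[OF assms(1)] and dy = deriv_simps[OF assms(2)]
  show ?thesis unfolding Let_def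
  proof (rule obst_gen[where ?c1.0 = a02 and ?c2.0 = a20 and ?c3.0 = "- (a20 - a11 + a02)", OF assms(1,2)])
    show "op_fin (\<lambda>i j. if (i, j) = (1, 0) then
                     a10 - a20 * a11 + a20 ^ 2 - dx a20 + dy (a20 - a11 + a02)
                   else if (i, j) = (0, 1) then
                     a01 - a02 * a11 + a02 ^ 2 + dx (a02 - a11)
                   else if (i, j) = (0, 0) then
                     a00 + a20 * a02 * (a20 - a11 + a02) + (a20 - a11 + a02) * dx a20 + a20 * dx (a20 - a11 + a02) + dx (dy (a20 - a11 + a02)) + a02 * dy (a20 - a11 + a02)
                   else 0)"
      by (rule fin_sub[where A="{(0,0),(1,0),(0,1)}"]) (auto simp: op_supp_def split: if_splits)
  qed (auto simp: fun_eq_iff P_def dx dy algebra_simps power2_eq_square split: if_splits)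
qed

end
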